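(* For $n>2$, the lattice generated by the vertices of $P(D_n)$ has index one in the lattice $\mathrm{aff}(P(D_n))\cap\mathbb{Z}^{n\times n}$; that is, every integer matrix $X$ that is a real linear combination of the differences $g-e$ ($g\in D_n$) is an integer linear combination of these differences.
   Context: Each $g\in S_n$ is identified with its $n\times n$ permutation matrix (entry $(i,j)$ is $1$ iff $g(i)=j$); $e$ is the identity; $P(G)=\mathrm{conv}\{g:g\in G\}$. $D_n\le S_n$ is generated by $r=(1\ 2\ \cdots\ n)$ and $f=(1\ n)(2\ n-1)\cdots(\lfloor\frac{n+1}{2}\rfloor\ \lceil\frac{n+1}{2}\rceil)$. *)

theory Defs
  imports Complex_Main
begin

text \<open>Points are 0-indexed: {0..<n} stands for {1..n}. Permutations of {0..<n}
are functions nat \<Rightarrow> nat that fix every point \<ge> n.\<close>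

definition rot :: "nat \<Rightarrow> nat \<Rightarrow> nat" where
  "rot n i = (if i < n then (i + 1) mod n else i)"

definition flip :: "nat \<Rightarrow> nat \<Rightarrow> nat" where
  "flip n i = (if i < n then n - 1 - i else i)"

text \<open>D_n: the subgroup of S_n generated by r and f. Since S_n is finite,
the generated submonoid equals the generated subgroup.\<close>
inductive_set dihedral :: "nat \<Rightarrow> (nat \<Rightarrow> nat) set" for n where
  id_in: "id \<in> dihedral n"
| rot_in: "g \<in> dihedral n \<Longrightarrow> rot n \<circ> g \<in> dihedral n"
| flip_in: "g \<in> dihedral n \<Longrightarrow> flip n \<circ> g \<in> dihedral n"

definition perm_mat :: "(nat \<Rightarrow> nat) \<Rightarrow> nat \<Rightarrow> nat \<Rightarrow> real" where
  "perm_mat g i j = (if g i = j then 1 else 0)"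

end

theory Submission
  imports Defs
begin

lemma m2: "(x::nat) < 2*n \<Longrightarrow> x mod n = (if x<n then x else x-n)"
  by (cases "x<n") (auto simp: le_mod_geq)
lemma a1: "(n::nat) > 0 \<Longrightarrow> i<n \<Longrightarrow> k<n \<Longrightarrow> n - 1 - ((i+k) mod n) = (n - 1 - k + (n-i)) mod n"
  by (simp add: m2; arith)
lemma a2: "(n::nat) > 0 \<Longrightarrow> i<n \<Longrightarrow> k<n \<Longrightarrow> n - 1 - ((k + (n - i)) mod n) = (i + (n - 1 - k)) mod n"
  by (simp add: m2; arith)
lemma a3: "(n::nat) > 0 \<Longrightarrow> i<n \<Longrightarrow> k<n \<Longrightarrow> ((i+k) mod n + (n - i)) mod n = k"
  by (simp add: m2; arith)
lemma a4: "(n::nat) > 0 \<Longrightarrow> i<n \<Longrightarrow> k<n \<Longrightarrow> (i + (k + (n - i)) mod n) mod n = k"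
  by (simp add: m2; arith)
lemma a5: "(n::nat) > 2 \<Longrightarrow> k<n \<Longrightarrow> (1+k) mod n \<noteq> (k + (n - 1)) mod n"
  by (simp add: m2; arith)
lemma a6: "(n::nat) > 0 \<Longrightarrow> i<n \<Longrightarrow> ((i + k) mod n + 1) mod n = (i + (k+1) mod n) mod n"
  by (simp add: mod_simps)
lemma a7: "(n::nat) > 0 \<Longrightarrow> i<n \<Longrightarrow> ((k + (n-i)) mod n + 1) mod n = ((k+1) mod n + (n - i)) mod n"
  by (metis mod_add_left_eq add.commute add.left_commute)

definition rk :: "nat \<Rightarrow> nat \<Rightarrow> nat \<Rightarrow> nat" where
  "rk n k = (\<lambda>i. if i<n then (i+k) mod n else i)"
definition fk :: "nat \<Rightarrow> nat \<Rightarrow> nat \<Rightarrow> nat" where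
  "fk n k = (\<lambda>i. if i<n then (k + (n - i)) mod n else i)"

lemma comp_closed: "h \<in> dihedral n \<Longrightarrow> g \<in> dihedral n \<Longrightarrow> h \<circ> g \<in> dihedral n"
  by (induction h rule: dihedral.induct) (auto simp: comp_assoc intro: dihedral.intros)

lemma rk_in: "0 < n \<Longrightarrow> rk n k \<in> dihedral n"
proof (induction k)
  case 0
  have "rk n 0 = id" by (auto simp: rk_def)
  then show ?case by (metis dihedral.id_in)
next
  case (Suc k)
  have "rk n (Suc k) = rot n \<circ> rk n k"
    by (auto simp: rk_def rot_def mod_Suc_eq)
  then show ?case using Suc by (metis dihedral.rot_in)
qed

lemma fk_in: "0 < n \<Longrightarrow> fk n k \<in> dihedral n"
proof -
  assume n: "0 < n"
  have "fk n 0 = rot n \<circ> (flip n \<circ> id)"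
    by (rule ext) (use n in \<open>auto simp: fk_def rot_def flip_def Suc_diff_Suc\<close>)
  then have f0: "fk n 0 \<in> dihedral n" using dihedral.rot_in[OF dihedral.flip_in[OF dihedral.id_in]] by metis
  have "fk n k = rk n k \<circ> fk n 0"
  proof (rule ext)
    fix i show "fk n k i = (rk n k \<circ> fk n 0) i"
    proof (cases "i<n")
      case True
      have "(k + (n - i)) mod n = ((0 + (n-i)) mod n + k) mod n" by (metis mod_add_left_eq add.commute add_0)
      then show ?thesis using True n unfolding fk_def rk_def comp_def by simp
    qed (simp add: fk_def rk_def)
  qed
  then show ?thesis using comp_closed[OF rk_in[OF n] f0] by simp
qed

lemma D_sub: "g \<in> dihedral n \<Longrightarrow> 0 < n \<Longrightarrow> \<exists>k<n. g = rk n k \<or> g = fk n k"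
proof (induction g rule: dihedral.induct)
  case id_in
  have "id = rk n 0" by (auto simp: rk_def)
  then show ?case using id_in by blast
next
  case (rot_in g)
  then obtain k where k: "k<n" "g = rk n k \<or> g = fk n k" by blast
  show ?case
  proof (cases "g = rk n k")
    case True
    have "rot n \<circ> g = rk n ((k+1) mod n)"
      by (rule ext) (use True rot_in.prems in \<open>auto simp: rk_def rot_def mod_Suc_eq mod_add_left_eq mod_add_right_eq\<close>)
    then show ?thesis using rot_in.prems by (intro exI[of _ "(k+1) mod n"]) auto
  next
    case False
    then have g: "g = fk n k" using k by blast
    have "rot n \<circ> g = fk n ((k+1) mod n)"
          proof (rule ext)
      fix i show "(rot n \<circ> g) i = fk n ((k+1) mod n) i"
      proof (cases "i<n")
        case True
        have "((k + (n-i)) mod n + 1) mod n = ((k+1) mod n + (n - i)) mod n" using a7 True rot_in.prems by blast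
        then show ?thesis using True rot_in.prems g unfolding fk_def rot_def comp_def by simp
      qed (simp add: g fk_def rot_def)
    qed
    then show ?thesis using rot_in.prems by (intro exI[of _ "(k+1) mod n"]) auto
  qed
next
  case (flip_in g)
  then obtain k where k: "k<n" "g = rk n k \<or> g = fk n k" by blast
  show ?case
  proof (cases "g = rk n k")
    case True
    have "flip n \<circ> g = fk n (n - 1 - k)"
          proof (rule ext)
      fix i show "(flip n \<circ> g) i = fk n (n - 1 - k) i"
      proof (cases "i<n")
        case True
        have "n - 1 - ((i+k) mod n) = (n - 1 - k + (n-i)) mod n" using a1 True flip_in.prems k by blast
        moreover have "(i+k) mod n < n" using flip_in.prems by simp
        ultimately show ?thesis using True flip_in.prems \<open>g = rk n k\<close> unfolding fk_def rk_def flip_def comp_def by simp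
      qed (simp add: True fk_def rk_def flip_def)
    qed
    then show ?thesis using flip_in.prems by (intro exI[of _ "n - 1 - k"]) auto
  next
    case False
    then have g: "g = fk n k" using k by blast
    have "flip n \<circ> g = rk n (n - 1 - k)"
          proof (rule ext)
      fix i show "(flip n \<circ> g) i = rk n (n - 1 - k) i"
      proof (cases "i<n")
        case True
        have "n - 1 - ((k + (n - i)) mod n) = (i + (n - 1 - k)) mod n" using a2 True flip_in.prems k by blast
        moreover have "(k + (n - i)) mod n < n" using flip_in.prems by simp
        ultimately show ?thesis using True flip_in.prems g unfolding fk_def rk_def flip_def comp_def by simp
      qed (simp add: g fk_def rk_def flip_def)
    qed
    then show ?thesis using flip_in.prems by (intro exI[of _ "n - 1 - k"]) auto
  qed
qed

lemma D_eq: "0 < n \<Longrightarrow> dihedral n = rk n ` {..<n} \<union> fk n ` {..<n}"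
  using D_sub rk_in fk_in by blast

lemma rk_0: "k < n \<Longrightarrow> rk n k 0 = k" by (auto simp: rk_def)
lemma fk_0: "k < n \<Longrightarrow> fk n k 0 = k" by (auto simp: fk_def)

lemma rk_ne_fk: "2 < n \<Longrightarrow> k < n \<Longrightarrow> m < n \<Longrightarrow> rk n k \<noteq> fk n m"
proof
  assume n: "2 < n" and k: "k < n" and m: "m < n" and e: "rk n k = fk n m"
  have "k = m" using rk_0[OF k] fk_0[OF m] e by simp
  moreover have "rk n k 1 = fk n m 1" using e by simp
  ultimately show False using a5[OF n k] n by (simp add: rk_def fk_def add.commute)
qed

lemma sum_D:
  assumes "2 < n"
  shows "(\<Sum>g\<in>dihedral n. w g) = (\<Sum>k<n. w (rk n k)) + (\<Sum>k<n. w (fk n k))"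
proof -
  have n: "0 < n" using assms by simp
  have ir: "inj_on (rk n) {..<n}" by (rule inj_onI) (metis lessThan_iff rk_0)
  have if': "inj_on (fk n) {..<n}" by (rule inj_onI) (metis lessThan_iff fk_0)
  have dj: "rk n ` {..<n} \<inter> fk n ` {..<n} = {}" using rk_ne_fk[OF assms] by blast
  have "(\<Sum>g\<in>dihedral n. w g) = (\<Sum>g\<in>rk n ` {..<n}. w g) + (\<Sum>g\<in>fk n ` {..<n}. w g)"
    unfolding D_eq[OF n] by (rule sum.union_disjoint) (use dj in auto)
  also have "\<dots> = (\<Sum>k<n. w (rk n k)) + (\<Sum>k<n. w (fk n k))"
    by (simp add: sum.reindex[OF ir] sum.reindex[OF if'])
  finally show ?thesis .
qed

lemma fiber:
  assumes n: "2 < n" and i: "i < n" and j: "j < n"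
  shows "{g \<in> dihedral n. g i = j} = {rk n ((j + (n-i)) mod n), fk n ((i+j) mod n)}"
proof -
  have n0: "0 < n" using n by simp
  have r: "rk n ((j + (n-i)) mod n) i = j" using a4[OF n0 i j] i by (simp add: rk_def)
  have f: "fk n ((i+j) mod n) i = j" using a3[OF n0 i j] i by (simp add: fk_def)
  show ?thesis
  proof (rule set_eqI, rule iffI)
    fix g assume "g \<in> {g \<in> dihedral n. g i = j}"
    then have g: "g \<in> dihedral n" "g i = j" by auto
    then obtain k where k: "k<n" "g = rk n k \<or> g = fk n k" using D_sub[OF _ n0] by blast
    show "g \<in> {rk n ((j + (n-i)) mod n), fk n ((i+j) mod n)}"
    proof (cases "g = rk n k")
      case True
      then have "(i+k) mod n = j" using g i by (simp add: rk_def)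
      then have "k = (j + (n-i)) mod n" using a3[OF n0 i k(1)] by simp
      then show ?thesis using True by simp
    next
      case False
      then have F: "g = fk n k" using k by blast
      then have "(k + (n-i)) mod n = j" using g i by (simp add: fk_def)
      then have "k = (i+j) mod n" using a4[OF n0 i k(1)] by simp
      then show ?thesis using F by simp
    qed
  next
    fix g assume "g \<in> {rk n ((j + (n-i)) mod n), fk n ((i+j) mod n)}"
    then show "g \<in> {g \<in> dihedral n. g i = j}" using r f rk_in[OF n0] fk_in[OF n0] by auto
  qed
qed

lemma finite_D: "0 < n \<Longrightarrow> finite (dihedral n)"
  by (simp add: D_eq)

lemma entry:
  assumes n: "2 < n" and i: "i < n" and j: "j < n"
  shows "(\<Sum>g\<in>dihedral n. w g * (perm_mat g i j - perm_mat id i j)) =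
    w (rk n ((j + (n-i)) mod n)) + w (fk n ((i+j) mod n)) - (\<Sum>g\<in>dihedral n. w g) * (if i = j then 1 else 0)"
proof -
  have n0: "0 < n" using n by simp
  have fin: "finite (dihedral n)" using finite_D[OF n0] .
  have ne: "rk n ((j + (n-i)) mod n) \<noteq> fk n ((i+j) mod n)"
    using rk_ne_fk[OF n] n0 by simp
  have "(\<Sum>g\<in>dihedral n. w g * perm_mat g i j) = (\<Sum>g\<in>dihedral n. if g i = j then w g else 0)"
    by (rule sum.cong) (auto simp: perm_mat_def)
  also have "\<dots> = (\<Sum>g\<in>{g \<in> dihedral n. g i = j}. w g)"
    by (rule sum.inter_filter[OF fin, symmetric])
  also have "\<dots> = w (rk n ((j + (n-i)) mod n)) + w (fk n ((i+j) mod n))"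
    unfolding fiber[OF n i j] using ne by simp
  finally have 1: "(\<Sum>g\<in>dihedral n. w g * perm_mat g i j) = w (rk n ((j + (n-i)) mod n)) + w (fk n ((i+j) mod n))" .
  have 2: "(\<Sum>g\<in>dihedral n. w g * perm_mat id i j) = (\<Sum>g\<in>dihedral n. w g) * (if i = j then 1 else 0)"
    by (simp add: perm_mat_def sum_distrib_right)
  show ?thesis
    by (simp add: right_diff_distrib sum_subtractf 1 2)
qed


lemma par: "even (n::nat) \<Longrightarrow> i < n \<Longrightarrow> (j + (n - i)) mod 2 = (i + j) mod 2"
  by (cases "even i"; cases "even j") (auto simp: mod2_eq_if even_diff_nat)

lemma frac_eq_Ints: "(x::real) - y \<in> \<int> \<Longrightarrow> frac x = frac y"
proof -
  assume "x - y \<in> \<int>"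
  then obtain k where k: "x - y = of_int k" by (auto elim: Ints_cases)
  then have "x = y + of_int k" by simp
  then show ?thesis by (simp add: frac_def)
qed

theorem proposition4:
  fixes n :: nat and X :: "nat \<Rightarrow> nat \<Rightarrow> real"
  assumes "n > 2"
    and "\<forall>i<n. \<forall>j<n. X i j \<in> \<int>"
    and "\<exists>c :: (nat \<Rightarrow> nat) \<Rightarrow> real. \<forall>i<n. \<forall>j<n.
           X i j = (\<Sum>g\<in>dihedral n. c g * (perm_mat g i j - perm_mat id i j))"
  shows "\<exists>c :: (nat \<Rightarrow> nat) \<Rightarrow> int. \<forall>i<n. \<forall>j<n.
           X i j = (\<Sum>g\<in>dihedral n. of_int (c g) * (perm_mat g i j - perm_mat id i j))"
proof -
  have n0: "0<n" and n1: "1<n" using assms(1) by auto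
  obtain c where hc: "\<forall>i<n. \<forall>j<n. X i j = (\<Sum>g\<in>dihedral n. c g * (perm_mat g i j - perm_mat id i j))"
    using assms(3) by blast
  define S where "S = (\<Sum>g\<in>dihedral n. c g)"
  define A where "A k = c (rk n k) - (if k = 0 then S else 0)" for k
  define b where "b k = c (fk n k)" for k
  define sd where "sd i j = (j + (n - i)) mod n" for i j
  define td where "td i j = (i + j) mod n" for i j
  have sdn: "sd i j < n" for i j using n0 by (simp add: sd_def)
  have tdn: "td i j < n" for i j using n0 by (simp add: td_def)
  have s0: "sd i j = 0 \<longleftrightarrow> i = j" if "i<n" "j<n" for i j
    using that unfolding sd_def by (simp add: m2; arith)
  have HX: "X i j = A (sd i j) + b (td i j)" if ij: "i<n" "j<n" for i j
  proof -
    have e: "X i j = c (rk n (sd i j)) + c (fk n (td i j)) - S * (if i = j then 1 else 0)"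
      using hc ij entry[OF assms(1) ij, of c] unfolding sd_def td_def S_def by simp
    show ?thesis
    proof (cases "i = j")
      case True
      then have "sd i j = 0" using s0[OF ij] by simp
      then show ?thesis using e True unfolding A_def b_def by simp
    next
      case False
      then have "sd i j \<noteq> 0" using s0[OF ij] by simp
      then show ?thesis using e False unfolding A_def b_def by simp
    qed
  qed
  have XZ: "A (sd i j) + b (td i j) \<in> \<int>" if "i<n" "j<n" for i j
  proof -
    have "X i j \<in> \<int>" using assms(2) that by blast
    then show ?thesis using HX[OF that] by simp
  qed
  have I1: "b k + A (k mod 2) \<in> \<int>" if k: "k<n" for k
  proof -
    define m where "m = k div 2"
    define r where "r = k mod 2"
    have kr: "k = 2*m + r" unfolding m_def r_def by simp
    have r2: "r < 2" unfolding r_def by simp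
    have mn: "m < n" "m + r < n" using kr k by auto
    have e: "m + r + (n - m) = r + n" using mn by simp
    have "sd m (m+r) = r" unfolding sd_def e using r2 n1 by simp
    moreover have "td m (m+r) = k" unfolding td_def using kr k by simp
    ultimately show ?thesis using XZ[OF mn] unfolding r_def by (simp add: add.commute)
  qed
  have I0: "A k + b k \<in> \<int>" if k: "k<n" for k
  proof -
    have "sd 0 k = k" "td 0 k = k" unfolding sd_def td_def using k by auto
    then show ?thesis using XZ[OF n0 k] by simp
  qed
  have I2: "A k - A (k mod 2) \<in> \<int>" if k: "k<n" for k
  proof -
    have "A k - A (k mod 2) = (A k + b k) - (b k + A (k mod 2))" by simp
    then show ?thesis using I0[OF k] I1[OF k] by (metis Ints_diff)
  qed
  have I3: "frac (A (sd i j mod 2)) = frac (A (td i j mod 2))" if ij: "i<n" "j<n" for i j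
  proof (cases "even n")
    case True
    have 1: "sd i j mod 2 = (j + (n - i)) mod 2" unfolding sd_def using True by (rule mod_mod_cancel)
    have 2: "td i j mod 2 = (i + j) mod 2" unfolding td_def using True by (rule mod_mod_cancel)
    have "sd i j mod 2 = td i j mod 2" unfolding 1 2 using par[OF True ij(1)] .
    then show ?thesis by (simp only:)
  next
    case False
    define h where "h = (n - 1) div 2"
    have h: "2 * h = n - 1" "h < n" unfolding h_def using False n0 by simp_all
    have p1: "sd h h = 0" "td h h = n - 1" unfolding sd_def td_def using h n0 by auto
    have p2: "sd (n-1) 0 = 1" "td (n-1) 0 = n - 1" unfolding sd_def td_def using n1 by auto
    have "A 0 + b (n-1) \<in> \<int>" using XZ[OF h(2) h(2)] p1 by simp
    moreover have "A 1 + b (n-1) \<in> \<int>" using XZ[of "n-1" 0] p2 n0 by simp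
    ultimately have "(A 1 + b (n-1)) - (A 0 + b (n-1)) \<in> \<int>" by (rule Ints_diff[rotated])
    then have "A 1 - A 0 \<in> \<int>" by simp
    then have f01: "frac (A 1) = frac (A 0)" by (rule frac_eq_Ints)
    have "frac (A (x mod 2)) = frac (A 0)" for x
      using f01 by (cases "x mod 2 = 0") (auto simp: mod2_eq_if)
    then show ?thesis by simp
  qed
  define A' where "A' k = A k - frac (A (k mod 2))" for k
  define b' where "b' k = b k + frac (A (k mod 2))" for k
  have A'Z: "A' k \<in> \<int>" if "k<n" for k
  proof -
    have "A' k = (A k - A (k mod 2)) + of_int \<lfloor>A (k mod 2)\<rfloor>" unfolding A'_def frac_def by simp
    then show ?thesis using Ints_add[OF I2[OF that] Ints_of_int] by simp
  qed
  have b'Z: "b' k \<in> \<int>" if "k<n" for k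
  proof -
    have "b' k = (b k + A (k mod 2)) - of_int \<lfloor>A (k mod 2)\<rfloor>" unfolding b'_def frac_def by simp
    then show ?thesis using Ints_diff[OF I1[OF that] Ints_of_int] by simp
  qed
  define cr where "cr g = (if g \<in> rk n ` {..<n} then A' (g 0) else b' (g 0))" for g
  define ci where "ci g = \<lfloor>cr g\<rfloor>" for g
  have crk: "real_of_int (ci (rk n k)) = A' k" if "k<n" for k
    using that A'Z[OF that] unfolding ci_def cr_def by (simp add: rk_0 of_int_floor)
  have cfk: "real_of_int (ci (fk n k)) = b' k" if "k<n" for k
  proof -
    have "fk n k \<notin> rk n ` {..<n}" using rk_ne_fk[OF assms(1)] that by (metis imageE lessThan_iff)
    then show ?thesis using that b'Z[OF that] unfolding ci_def cr_def by (simp add: fk_0 of_int_floor)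
  qed
  have SD: "S = (\<Sum>k<n. c (rk n k)) + (\<Sum>k<n. c (fk n k))"
    unfolding S_def by (rule sum_D[OF assms(1)])
  have sumA: "(\<Sum>k<n. A k) = (\<Sum>k<n. c (rk n k)) - S"
  proof -
    have "(\<Sum>k<n. A k) = (\<Sum>k<n. c (rk n k)) - (\<Sum>k<n. (if k = 0 then S else 0))"
      unfolding A_def by (simp add: sum_subtractf)
    also have "(\<Sum>k<n. (if k = 0 then S else 0)) = S" using n0 by (simp add: sum.delta)
    finally show ?thesis .
  qed
  have sum0: "(\<Sum>g\<in>dihedral n. real_of_int (ci g)) = 0"
  proof -
    have "(\<Sum>g\<in>dihedral n. real_of_int (ci g)) = (\<Sum>k<n. A' k) + (\<Sum>k<n. b' k)"
      using sum_D[OF assms(1), of "\<lambda>g. real_of_int (ci g)"] crk cfk by simp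
    also have "\<dots> = (\<Sum>k<n. A' k + b' k)" by (simp add: sum.distrib)
    also have "\<dots> = (\<Sum>k<n. A k + b k)" unfolding A'_def b'_def by simp
    also have "\<dots> = (\<Sum>k<n. A k) + (\<Sum>k<n. b k)" by (simp add: sum.distrib)
    also have "\<dots> = 0" using sumA SD unfolding b_def by simp
    finally show ?thesis .
  qed
  have "X i j = (\<Sum>g\<in>dihedral n. of_int (ci g) * (perm_mat g i j - perm_mat id i j))"
    if ij: "i<n" "j<n" for i j
  proof -
    have "(\<Sum>g\<in>dihedral n. of_int (ci g) * (perm_mat g i j - perm_mat id i j))
        = real_of_int (ci (rk n (sd i j))) + real_of_int (ci (fk n (td i j)))"
      using entry[OF assms(1) ij, of "\<lambda>g. real_of_int (ci g)"] sum0 unfolding sd_def td_def by simp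
    also have "\<dots> = A' (sd i j) + b' (td i j)" using crk[OF sdn] cfk[OF tdn] by simp
    also have "\<dots> = A (sd i j) + b (td i j)" unfolding A'_def b'_def using I3[OF ij] by simp
    also have "\<dots> = X i j" using HX[OF ij] by simp
    finally show ?thesis by simp
  qed
  then show ?thesis by blast
qed

end
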